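(* Let $k\ge 1$ be an integer and define $$F_k(y)=\sum_{\lambda\in\mathscr{P}} y^{\ell(\lambda)} z^{\mu_k(\lambda)} q^{|\lambda|},\qquad G_k(y)=\sum_{\lambda\in\mathscr{D}} y^{\ell(\lambda)} z^{\mu_k(\lambda)} q^{|\lambda|}.$$ Then $$F_k(y) - F_k(yq) = \frac{yzq}{(yq;q)_k}F_k(yq^k)$$ and $$G_k(y) - G_k(yq) = yzq(-yq^2;q)_{k-1}G_k(yq^k).$$
   Context: $\mathscr{P}$ is the set of all integer partitions and $\mathscr{D}$ the set of partitions into distinct parts (both including the empty partition). For a partition $\lambda$, $|\lambda|$ is the sum of its parts and $\ell(\lambda)$ its number of parts. For a positive integer $k$, the $k$-measure $\mu_k(\lambda)$ is the length of the longest subsequence of the parts of $\lambda$ (listed in weakly decreasing order) in which the difference between any two consecutive members of the subsequence is at least $k$. The $q$-Pochhammer symbol is $(A;q)_n=\prod_{j=0}^{n-1}(1-Aq^j)$. The series are regarded as formal power series (or with $|q|<1$). *)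

theory Defs
  imports "HOL-Computational_Algebra.Formal_Power_Series" "HOL-Library.Sublist"
begin

definition partitions :: "nat list set" where
  "partitions = {xs. sorted_wrt (\<ge>) xs \<and> (\<forall>x\<in>set xs. 0 < x)}"

definition distinct_partitions :: "nat list set" where
  "distinct_partitions = {xs \<in> partitions. distinct xs}"

definition kmeasure :: "nat \<Rightarrow> nat list \<Rightarrow> nat" where
  "kmeasure k xs = Max {length ys | ys. subseq ys xs \<and>
      (\<forall>i. Suc i < length ys \<longrightarrow> ys ! Suc i + k \<le> ys ! i)}"

definition qpoch :: "'a::comm_ring_1 fps \<Rightarrow> nat \<Rightarrow> 'a fps" where
  "qpoch A n = (\<Prod>j<n. 1 - A * fps_X ^ j)"

text \<open>The generating function sum over lambda in S of
  y^(length lambda) z^(mu_k lambda) q^(|lambda|), as a formal power series in q;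
  y and z may themselves be power series in q (so substitutions y := y q^m make sense).
  The n-th coefficient only involves partitions with |lambda| <= n (finitely many).\<close>
definition genfun :: "nat list set \<Rightarrow> nat \<Rightarrow> 'a::comm_ring_1 fps \<Rightarrow> 'a fps \<Rightarrow> 'a fps" where
  "genfun S k y z = Abs_fps (\<lambda>n. \<Sum>lam \<in> {lam \<in> S. sum_list lam \<le> n}.
      fps_nth (y ^ length lam * z ^ kmeasure k lam * fps_X ^ sum_list lam) n)"

definition F :: "nat \<Rightarrow> 'a::comm_ring_1 fps \<Rightarrow> 'a fps \<Rightarrow> 'a fps" where
  "F k y z = genfun partitions k y z"

definition G :: "nat \<Rightarrow> 'a::comm_ring_1 fps \<Rightarrow> 'a fps \<Rightarrow> 'a fps" where
  "G k y z = genfun distinct_partitions k y z"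

end

theory Submission
  imports Defs
begin

abbreviation "P \<equiv> partitions"

definition gs :: "nat list set \<Rightarrow> (nat list \<Rightarrow> 'a::comm_ring_1 fps) \<Rightarrow> 'a fps" where
  "gs S c = Abs_fps (\<lambda>n. \<Sum>lam \<in> {lam \<in> S. sum_list lam \<le> n}.
      fps_nth (c lam * fps_X ^ sum_list lam) n)"

lemma genfun_gs: "genfun S k y z = gs S (\<lambda>lam. y ^ length lam * z ^ kmeasure k lam)"
  unfolding genfun_def gs_def by simp

lemma len_le_sum: "\<forall>x\<in>set xs. 0 < (x::nat) \<Longrightarrow> length xs \<le> sum_list xs"
  by (induction xs) auto

lemma finite_P_bounded: "finite {lam \<in> P. sum_list lam \<le> n}"
proof (rule finite_subset)
  show "{lam \<in> P. sum_list lam \<le> n} \<subseteq> {xs. set xs \<subseteq> {0..n} \<and> length xs \<le> n}"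
  proof clarify
    fix xs assume "xs \<in> P" "sum_list xs \<le> n"
    then have pos: "\<forall>x\<in>set xs. 0 < x" by (simp add: partitions_def)
    have "\<forall>x\<in>set xs. x \<le> n" using member_le_sum_list[of _ xs] \<open>sum_list xs \<le> n\<close> by fastforce
    then show "set xs \<subseteq> {0..n} \<and> length xs \<le> n" using len_le_sum[OF pos] \<open>sum_list xs \<le> n\<close> by auto
  qed
  show "finite {xs. set xs \<subseteq> {0..n} \<and> length xs \<le> n}" by (rule finite_lists_length_le) simp
qed

lemma finite_S_bounded: "S \<subseteq> P \<Longrightarrow> finite {lam \<in> S. sum_list lam \<le> n}"
  by (rule finite_subset[OF _ finite_P_bounded]) auto

lemma gs_nth: "fps_nth (gs S c) n = (\<Sum>lam \<in> {lam \<in> S. sum_list lam \<le> n}.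
      fps_nth (c lam * fps_X ^ sum_list lam) n)"
  unfolding gs_def by simp

lemma gs_coeff:
  assumes "S \<subseteq> P" "n \<le> N"
  shows "fps_nth (gs S c) n = (\<Sum>lam \<in> {lam \<in> S. sum_list lam \<le> N}.
      fps_nth (c lam * fps_X ^ sum_list lam) n)"
  unfolding gs_nth
  by (rule sum.mono_neutral_left) (use assms finite_S_bounded in \<open>auto simp: fps_X_power_mult_right_nth\<close>)

lemma gs_mult:
  assumes "S \<subseteq> P"
  shows "d * gs S c = gs S (\<lambda>l. d * c l)"
proof (rule fps_ext)
  fix n
  have "fps_nth (d * gs S c) n = (\<Sum>i=0..n. fps_nth d i * (\<Sum>lam \<in> {lam \<in> S. sum_list lam \<le> n}.
      fps_nth (c lam * fps_X ^ sum_list lam) (n - i)))"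
    unfolding fps_mult_nth[of d "gs S c"] by (rule sum.cong[OF refl], subst gs_coeff[OF assms, where N=n]) auto
  also have "\<dots> = (\<Sum>lam \<in> {lam \<in> S. sum_list lam \<le> n}. \<Sum>i=0..n. fps_nth d i *
      fps_nth (c lam * fps_X ^ sum_list lam) (n - i))"
    by (simp add: sum_distrib_left sum.swap[of _ "{0..n}"])
  also have "\<dots> = fps_nth (gs S (\<lambda>l. d * c l)) n"
    unfolding gs_nth fps_mult_nth[symmetric] by (simp add: mult.assoc)
  finally show "fps_nth (d * gs S c) n = fps_nth (gs S (\<lambda>l. d * c l)) n" .
qed

lemma gs_union:
  assumes "S1 \<subseteq> P" "S2 \<subseteq> P" "S1 \<inter> S2 = {}"
  shows "gs (S1 \<union> S2) c = gs S1 c + gs S2 c"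
proof (rule fps_ext)
  fix n
  have e: "{lam \<in> S1 \<union> S2. sum_list lam \<le> n} = {lam \<in> S1. sum_list lam \<le> n} \<union> {lam \<in> S2. sum_list lam \<le> n}" by auto
  show "fps_nth (gs (S1 \<union> S2) c) n = fps_nth (gs S1 c + gs S2 c) n"
    unfolding gs_nth fps_add_nth e
    by (rule sum.union_disjoint) (use assms finite_S_bounded in auto)
qed

lemma gs_reindex:
  assumes bij: "bij_betw h S T" and sub: "S \<subseteq> P" "T \<subseteq> P"
    and eq: "\<And>m. m \<in> S \<Longrightarrow> c' (h m) * fps_X ^ sum_list (h m) = c m * fps_X ^ sum_list m"
  shows "gs T c' = gs S c"
proof (rule fps_ext)
  fix n
  have inj: "inj_on h S" using bij bij_betw_def by blast
  have img: "h ` {m \<in> S. sum_list (h m) \<le> n} = {l \<in> T. sum_list l \<le> n}"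
    using bij unfolding bij_betw_def by auto
  have fin1: "finite {m \<in> S. sum_list (h m) \<le> n}"
  proof (rule finite_imageD)
    show "finite (h ` {m \<in> S. sum_list (h m) \<le> n})" unfolding img using sub finite_S_bounded by blast
    show "inj_on h {m \<in> S. sum_list (h m) \<le> n}" using inj by (rule inj_on_subset) auto
  qed
  have fin2: "finite {m \<in> S. sum_list m \<le> n}" using sub finite_S_bounded by blast
  have "fps_nth (gs T c') n = (\<Sum>m \<in> {m \<in> S. sum_list (h m) \<le> n}. fps_nth (c' (h m) * fps_X ^ sum_list (h m)) n)"
  proof -
    have "inj_on h {m \<in> S. sum_list (h m) \<le> n}" using inj by (rule inj_on_subset) auto
    then show ?thesis unfolding gs_nth img[symmetric] by (simp add: sum.reindex o_def)
  qed
  also have "\<dots> = (\<Sum>m \<in> {m \<in> S. sum_list (h m) \<le> n}. fps_nth (c m * fps_X ^ sum_list m) n)"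
    by (rule sum.cong) (auto simp: eq)
  also have "\<dots> = (\<Sum>m \<in> {m \<in> S. sum_list (h m) \<le> n \<and> sum_list m \<le> n}. fps_nth (c m * fps_X ^ sum_list m) n)"
    by (rule sum.mono_neutral_right) (use fin1 in \<open>auto simp: fps_X_power_mult_right_nth\<close>)
  also have "\<dots> = (\<Sum>m \<in> {m \<in> S. sum_list m \<le> n}. fps_nth (c m * fps_X ^ sum_list m) n)"
  proof (rule sum.mono_neutral_left[OF fin2])
    show "\<forall>i\<in>{m \<in> S. sum_list m \<le> n} - {m \<in> S. sum_list (h m) \<le> n \<and> sum_list m \<le> n}.
        fps_nth (c i * fps_X ^ sum_list i) n = 0"
    proof
      fix m assume m: "m \<in> {m \<in> S. sum_list m \<le> n} - {m \<in> S. sum_list (h m) \<le> n \<and> sum_list m \<le> n}"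
      then have "fps_nth (c m * fps_X ^ sum_list m) n = fps_nth (c' (h m) * fps_X ^ sum_list (h m)) n" using eq by auto
      also have "\<dots> = 0" using m by (auto simp: fps_X_power_mult_right_nth)
      finally show "fps_nth (c m * fps_X ^ sum_list m) n = 0" .
    qed
  qed auto
  also have "\<dots> = fps_nth (gs S c) n" unfolding gs_nth ..
  finally show "fps_nth (gs T c') n = fps_nth (gs S c) n" .
qed

definition R :: "nat \<Rightarrow> nat \<Rightarrow> nat \<Rightarrow> bool" where "R k a b \<longleftrightarrow> b + k \<le> a"

lemma transp_R: "transp (R k)" unfolding transp_def R_def by auto

lemma kmeasure_alt: "kmeasure k xs = Max {length ys | ys. subseq ys xs \<and> sorted_wrt (R k) ys}"
  unfolding kmeasure_def sorted_wrt_iff_nth_Suc_transp[OF transp_R] R_def ..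

lemma subseq_set_sub: "subseq ys xs \<Longrightarrow> set ys \<subseteq> set xs"
  by (induct rule: list_emb.induct) auto

lemma km_finite: "finite {length ys | ys. subseq ys xs \<and> sorted_wrt (R k) ys}"
proof -
  have "{length ys | ys. subseq ys xs \<and> sorted_wrt (R k) ys} \<subseteq> length ` {ys. set ys \<subseteq> set xs \<and> length ys \<le> length xs}"
    using subseq_set_sub list_emb_length by blast
  moreover have "finite {ys. set ys \<subseteq> set xs \<and> length ys \<le> length xs}"
    by (rule finite_lists_length_le) simp
  ultimately show ?thesis by (meson finite_imageI finite_subset)
qed

lemma km_ge: "subseq ys xs \<Longrightarrow> sorted_wrt (R k) ys \<Longrightarrow> length ys \<le> kmeasure k xs"
  unfolding kmeasure_alt by (rule Max_ge[OF km_finite]) auto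

lemma km_obtain: obtains ys where "subseq ys xs" "sorted_wrt (R k) ys" "length ys = kmeasure k xs"
proof -
  have "kmeasure k xs \<in> {length ys | ys. subseq ys xs \<and> sorted_wrt (R k) ys}"
  proof -
    have "0 \<in> {length ys | ys. subseq ys xs \<and> sorted_wrt (R k) ys}"
      by (rule CollectI, rule exI[of _ "[]"]) simp
    then show ?thesis unfolding kmeasure_alt by (intro Max_in[OF km_finite]) blast
  qed
  then obtain ys where "kmeasure k xs = length ys" "subseq ys xs" "sorted_wrt (R k) ys" by blast
  then show ?thesis using that by simp
qed

lemma km_shift: "kmeasure k (map (\<lambda>x. x + a) xs) = kmeasure k xs"
proof (rule antisym)
  obtain ys where ys: "subseq ys (map (\<lambda>x. x + a) xs)" "sorted_wrt (R k) ys"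
    "length ys = kmeasure k (map (\<lambda>x. x + a) xs)" by (rule km_obtain)
  have ge: "\<forall>y\<in>set ys. a \<le> y" using subseq_set_sub[OF ys(1)] by auto
  have "subseq (map (\<lambda>x. x - a) ys) (map (\<lambda>x. x - a) (map (\<lambda>x. x + a) xs))"
    by (rule subseq_map[OF ys(1)])
  then have "subseq (map (\<lambda>x. x - a) ys) xs" by (simp add: comp_def)
  moreover have "sorted_wrt (R k) (map (\<lambda>x. x - a) ys)"
    unfolding sorted_wrt_map by (rule sorted_wrt_mono_rel[OF _ ys(2)]) (use ge in \<open>auto simp: R_def\<close>)
  ultimately have "length (map (\<lambda>x. x - a) ys) \<le> kmeasure k xs" by (rule km_ge)
  then show "kmeasure k (map (\<lambda>x. x + a) xs) \<le> kmeasure k xs" using ys(3) by simp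
next
  obtain ys where ys: "subseq ys xs" "sorted_wrt (R k) ys" "length ys = kmeasure k xs" by (rule km_obtain)
  have "subseq (map (\<lambda>x. x + a) ys) (map (\<lambda>x. x + a) xs)" by (rule subseq_map[OF ys(1)])
  moreover have "sorted_wrt (R k) (map (\<lambda>x. x + a) ys)"
    unfolding sorted_wrt_map by (rule sorted_wrt_mono_rel[OF _ ys(2)]) (auto simp: R_def)
  ultimately have "length (map (\<lambda>x. x + a) ys) \<le> kmeasure k (map (\<lambda>x. x + a) xs)" by (rule km_ge)
  then show "kmeasure k xs \<le> kmeasure k (map (\<lambda>x. x + a) xs)" using ys(3) by simp
qed

lemma sorted_split: "sorted_wrt (\<ge>) (xs::nat list) \<Longrightarrow> xs = filter (\<lambda>x. k < x) xs @ filter (\<lambda>x. \<not> k < x) xs"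
proof (induction xs)
  case (Cons x xs)
  show ?case
  proof (cases "k < x")
    case True then show ?thesis using Cons by auto
  next
    case False
    then have "\<forall>y\<in>set xs. \<not> k < y" using Cons.prems by auto
    then show ?thesis using False by (simp add: filter_id_conv filter_empty_conv)
  qed
qed simp

lemma km_one:
  assumes "xs \<in> P" "1 \<in> set xs" "k \<ge> 1"
  shows "kmeasure k xs = Suc (kmeasure k (filter (\<lambda>x. k < x) xs))"
proof (rule antisym)
  have pos: "\<forall>x\<in>set xs. 0 < x" using assms(1) by (simp add: partitions_def)
  obtain ys where ys: "subseq ys xs" "sorted_wrt (R k) ys" "length ys = kmeasure k xs" by (rule km_obtain)
  show "kmeasure k xs \<le> Suc (kmeasure k (filter (\<lambda>x. k < x) xs))"
  proof (cases "ys = []")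
    case True then show ?thesis using ys by simp
  next
    case False
    then have ysd: "ys = butlast ys @ [last ys]" by simp
    have "last ys \<in> set ys" using False by simp
    then have "last ys \<in> set xs" using subseq_set_sub[OF ys(1)] by blast
    then have l1: "1 \<le> last ys" using pos by auto
    have sb: "sorted_wrt (R k) (butlast ys)" and gt: "\<forall>a\<in>set (butlast ys). last ys + k \<le> a"
    proof -
      have "sorted_wrt (R k) (butlast ys @ [last ys])" using ys(2) ysd by metis
      then show "sorted_wrt (R k) (butlast ys)" "\<forall>a\<in>set (butlast ys). last ys + k \<le> a"
        by (auto simp: sorted_wrt_append R_def)
    qed
    have "subseq (butlast ys) ys" by (rule prefix_imp_subseq[OF prefixeq_butlast])
    then have "subseq (butlast ys) xs" using ys(1) by (rule subseq_order.trans)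
    then have "subseq (filter (\<lambda>x. k < x) (butlast ys)) (filter (\<lambda>x. k < x) xs)" by (rule subseq_filter)
    moreover have "filter (\<lambda>x. k < x) (butlast ys) = butlast ys" using gt l1 by (auto simp: filter_id_conv)
    ultimately have "length (butlast ys) \<le> kmeasure k (filter (\<lambda>x. k < x) xs)" using sb km_ge by metis
    then show ?thesis using ys(3) False by simp
  qed
next
  obtain ys where ys: "subseq ys (filter (\<lambda>x. k < x) xs)" "sorted_wrt (R k) ys"
    "length ys = kmeasure k (filter (\<lambda>x. k < x) xs)" by (rule km_obtain)
  have big: "\<forall>a\<in>set ys. k < a" using subseq_set_sub[OF ys(1)] by auto
  have sx: "sorted_wrt (\<ge>) xs" using assms(1) by (simp add: partitions_def)
  have "subseq [1] (filter (\<lambda>x. \<not> k < x) xs)" using assms by (simp add: subseq_singleton_left)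
  then have "subseq (ys @ [1]) (filter (\<lambda>x. k < x) xs @ filter (\<lambda>x. \<not> k < x) xs)"
    using ys(1) by (rule list_emb_append_mono[rotated])
  then have "subseq (ys @ [1]) xs" using sorted_split[OF sx, of k] by metis
  moreover have "sorted_wrt (R k) (ys @ [1])" using ys(2) big by (auto simp: sorted_wrt_append R_def)
  ultimately have "length (ys @ [1]) \<le> kmeasure k xs" by (rule km_ge)
  then show "Suc (kmeasure k (filter (\<lambda>x. k < x) xs)) \<le> kmeasure k xs" using ys(3) by simp
qed

lemma P_mem: "xs \<in> P \<longleftrightarrow> sorted_wrt (\<ge>) xs \<and> (\<forall>x\<in>set xs. 0 < x)"
  by (simp add: partitions_def)

lemma P_mset_eq: assumes "a \<in> P" "b \<in> P" "mset a = mset b" shows "a = b"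
proof -
  have "sort a = rev a" by (rule properties_for_sort) (use assms in \<open>simp_all add: P_mem sorted_wrt_rev\<close>)
  moreover have "sort a = rev b" by (rule properties_for_sort) (use assms in \<open>simp_all add: P_mem sorted_wrt_rev\<close>)
  ultimately show ?thesis by simp
qed

lemma sorted_wrt_remove1: "sorted_wrt Q xs \<Longrightarrow> sorted_wrt Q (remove1 j xs)"
  by (induction xs) (auto dest: set_mp[OF set_remove1_subset])

lemma remove1_P: "a \<in> P \<Longrightarrow> remove1 j a \<in> P"
  by (auto simp: P_mem sorted_wrt_remove1 dest: set_mp[OF set_remove1_subset])

lemma remove1_bij:
  assumes "0 < j"
  shows "bij_betw (remove1 j) {l \<in> P. j \<in> set l \<and> Rp (remove1 j l)} {m \<in> P. Rp m}"
  unfolding bij_betw_def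
proof (intro conjI)
  show "inj_on (remove1 j) {l \<in> P. j \<in> set l \<and> Rp (remove1 j l)}"
  proof (rule inj_onI)
    fix a b assume a: "a \<in> {l \<in> P. j \<in> set l \<and> Rp (remove1 j l)}" and b: "b \<in> {l \<in> P. j \<in> set l \<and> Rp (remove1 j l)}"
      and e: "remove1 j a = remove1 j b"
    have "mset a = add_mset j (mset (remove1 j a))" using a by (simp add: insert_DiffM)
    also have "\<dots> = mset b" using b e by (simp add: insert_DiffM)
    finally show "a = b" using a b P_mset_eq by blast
  qed
  show "remove1 j ` {l \<in> P. j \<in> set l \<and> Rp (remove1 j l)} = {m \<in> P. Rp m}"
  proof (intro equalityI subsetI)
    fix m assume "m \<in> remove1 j ` {l \<in> P. j \<in> set l \<and> Rp (remove1 j l)}"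
    then show "m \<in> {m \<in> P. Rp m}" using remove1_P by blast
  next
    fix m assume m: "m \<in> {m \<in> P. Rp m}"
    define l where "l = rev (insort j (rev m))"
    have lP: "l \<in> P" using m assms
      by (auto simp: l_def P_mem sorted_wrt_rev sorted_insort set_insort_key)
    have jl: "j \<in> set l" by (simp add: l_def set_insort_key)
    have "remove1 j l = m"
      by (rule P_mset_eq) (use lP m remove1_P in \<open>auto simp: l_def\<close>)
    then show "m \<in> remove1 j ` {l \<in> P. j \<in> set l \<and> Rp (remove1 j l)}"
      using lP jl m by force
  qed
qed

lemma sum_remove1: "j \<in> set xs \<Longrightarrow> sum_list xs = j + sum_list (remove1 j (xs::nat list))"
  by (induction xs) auto

lemma filter_remove1: "\<not> Q j \<Longrightarrow> filter Q (remove1 j xs) = filter Q xs"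
  by (induction xs) auto

lemma distinct_remove1_iff: "j \<in> set xs \<Longrightarrow> distinct xs \<longleftrightarrow> distinct (remove1 j xs) \<and> j \<notin> set (remove1 j xs)"
  by (induction xs) auto

lemma sum_list_map_plus: "sum_list (map (\<lambda>x. x + a) xs) = sum_list xs + a * length (xs::nat list)"
  by (induction xs) auto

lemma shift_bij:
  "bij_betw (map (\<lambda>x. x + a)) {l \<in> P. Q l} {l \<in> P. (\<forall>x\<in>set l. a < x) \<and> Q (map (\<lambda>x. x - a) l)}"
  unfolding bij_betw_def
proof (intro conjI)
  show "inj_on (map (\<lambda>x. x + a)) {l \<in> P. Q l}"
  proof (rule inj_onI)
    fix u v :: "nat list" assume "map (\<lambda>x. x+a) u = map (\<lambda>x. x+a) v"
    then show "u = v" using inj_map_eq_map[of "\<lambda>x::nat. x + a"] by (simp add: inj_def)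
  qed
next
  show "map (\<lambda>x. x + a) ` {l \<in> P. Q l} = {l \<in> P. (\<forall>x\<in>set l. a < x) \<and> Q (map (\<lambda>x. x - a) l)}"
  proof (intro equalityI subsetI)
    fix l assume "l \<in> map (\<lambda>x. x + a) ` {l \<in> P. Q l}"
    then obtain m where m: "m \<in> P" "Q m" "l = map (\<lambda>x. x + a) m" by auto
    have "map (\<lambda>x. x - a) l = m" using m(3) by (simp add: comp_def)
    then show "l \<in> {l \<in> P. (\<forall>x\<in>set l. a < x) \<and> Q (map (\<lambda>x. x - a) l)}"
      using m(1,2) unfolding m(3) by (auto simp: P_mem sorted_wrt_map)
  next
    fix l assume l: "l \<in> {l \<in> P. (\<forall>x\<in>set l. a < x) \<and> Q (map (\<lambda>x. x - a) l)}"
    have s: "sorted_wrt (\<ge>) l" and pa: "\<forall>x\<in>set l. a < x" and q: "Q (map (\<lambda>x. x - a) l)"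
      using l by (auto simp: P_mem)
    have "sorted_wrt (\<lambda>x y. y - a \<le> x - a) l"
      by (rule sorted_wrt_mono_rel[OF _ s]) (simp add: diff_le_mono)
    then have "map (\<lambda>x. x - a) l \<in> P" using pa by (simp add: P_mem sorted_wrt_map)
    moreover have "map (\<lambda>x. x + a) (map (\<lambda>x. x - a) l) = l" unfolding map_map by (rule map_idI) (use pa in auto)
    ultimately show "l \<in> map (\<lambda>x. x + a) ` {l \<in> P. Q l}" using q by (metis (mono_tags, lifting) image_eqI mem_Collect_eq)
  qed
qed

definition cc :: "nat \<Rightarrow> 'a::comm_ring_1 fps \<Rightarrow> 'a fps \<Rightarrow> nat list \<Rightarrow> 'a fps" where
  "cc k z y l = y ^ length l * z ^ kmeasure k l"

lemma F_gs: "F k y z = gs P (cc k z y)"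
  unfolding F_def genfun_gs cc_def ..

lemma G_gs: "G k y z = gs {l \<in> P. distinct l} (cc k z y)"
  unfolding G_def genfun_gs cc_def distinct_partitions_def ..

definition h1 :: "nat \<Rightarrow> nat list \<Rightarrow> nat list" where
  "h1 k m = map (\<lambda>x. x + k) m @ [1]"

lemma h1_P:
  assumes "m \<in> P" "1 \<le> k"
  shows "h1 k m \<in> P" "1 \<in> set (h1 k m)" "\<forall>x\<in>set (h1 k m). x \<le> 1 \<or> k < x"
    "remove1 1 (h1 k m) = map (\<lambda>x. x + k) m" "filter (\<lambda>x. k < x) (h1 k m) = map (\<lambda>x. x + k) m"
proof -
  have pos: "\<forall>x\<in>set m. 0 < x" and s: "sorted_wrt (\<ge>) m" using assms by (auto simp: P_mem)
  show "h1 k m \<in> P" using pos s by (auto simp: h1_def P_mem sorted_wrt_append sorted_wrt_map)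
  show "1 \<in> set (h1 k m)" by (simp add: h1_def)
  show "\<forall>x\<in>set (h1 k m). x \<le> 1 \<or> k < x" using pos by (auto simp: h1_def)
  have n1: "1 \<notin> set (map (\<lambda>x. x + k) m)" using pos assms(2) by auto
  show "remove1 1 (h1 k m) = map (\<lambda>x. x + k) m" using n1 by (simp add: h1_def remove1_append)
  show "filter (\<lambda>x. k < x) (h1 k m) = map (\<lambda>x. x + k) m" using pos assms(2)
    by (auto simp: h1_def filter_id_conv)
qed

lemma h1_km: assumes "m \<in> P" "1 \<le> k" shows "kmeasure k (h1 k m) = Suc (kmeasure k m)"
  using km_one[OF h1_P(1,2)[OF assms] assms(2)] h1_P(5)[OF assms] km_shift by simp

lemma h1_len: "length (h1 k m) = Suc (length m)" by (simp add: h1_def)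
lemma h1_sum: "sum_list (h1 k m) = sum_list m + k * length m + 1" by (simp add: h1_def sum_list_map_plus)

lemma h1_inj: "inj (h1 k)"
proof (rule injI)
  fix u v assume "h1 k u = h1 k v"
  then have "map (\<lambda>x. x+k) u = map (\<lambda>x. x+k) v" by (simp add: h1_def)
  then show "u = v" using inj_map_eq_map[of "\<lambda>x::nat. x + k"] by (simp add: inj_def)
qed

lemma h1_distinct: assumes "\<forall>x\<in>set m. 0 < x" "1 \<le> k" shows "distinct (h1 k m) \<longleftrightarrow> distinct m"
proof -
  have "inj_on (\<lambda>x::nat. x + k) (set m)" by (simp add: inj_on_def)
  then show ?thesis using assms by (auto simp: h1_def distinct_map)
qed

lemma h1_surj:
  assumes "l \<in> P" "1 \<in> set l" "\<forall>x\<in>set l. x \<le> 1 \<or> k < x" "1 \<notin> set (remove1 1 l)" "1 \<le> k"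
  shows "map (\<lambda>x. x - k) (filter (\<lambda>x. k < x) l) \<in> P" "l = h1 k (map (\<lambda>x. x - k) (filter (\<lambda>x. k < x) l))"
proof -
  have pos: "\<forall>x\<in>set l. 0 < x" and s: "sorted_wrt (\<ge>) l" using assms by (auto simp: P_mem)
  have "sorted_wrt (\<lambda>x y. y - k \<le> x - k) (filter (\<lambda>x. k < x) l)"
    by (rule sorted_wrt_mono_rel[OF _ sorted_wrt_filter[OF s]]) (simp add: diff_le_mono)
  then show "map (\<lambda>x. x - k) (filter (\<lambda>x. k < x) l) \<in> P" by (auto simp: P_mem sorted_wrt_map)
  have id: "map (\<lambda>x. x + k) (map (\<lambda>x. x - k) (filter (\<lambda>x. k < x) l)) = filter (\<lambda>x. k < x) l"
    unfolding map_map by (rule map_idI) auto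
  have "filter (\<lambda>x. \<not> k < x) l = filter ((=) 1) l"
    by (rule filter_cong[OF refl]) (use pos assms(3,5) in fastforce)
  also have "\<dots> = replicate (count (mset l) 1) 1" by (simp add: replicate_count_mset_eq_filter_eq)
  also have "count (mset l) 1 = 1"
  proof -
    have "count (mset (remove1 1 l)) 1 = 0" using assms(4) by (metis count_eq_zero_iff set_mset_mset)
    moreover have "count (mset (remove1 1 l)) 1 = count (mset l) 1 - 1" by simp
    moreover have "count (mset l) 1 \<ge> 1" using assms(2) by (simp add: Suc_le_eq)
    ultimately show ?thesis by linarith
  qed
  finally have "filter (\<lambda>x. \<not> k < x) l = [1]" by simp
  then have "l = filter (\<lambda>x. k < x) l @ [1]" using sorted_split[OF s, of k] by metis
  then show "l = h1 k (map (\<lambda>x. x - k) (filter (\<lambda>x. k < x) l))" unfolding h1_def id by simp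
qed

lemma gs_remove1:
  fixes y z :: "'a::comm_ring_1 fps"
  assumes "1 \<le> j" "j \<le> k" "T \<subseteq> P" "\<forall>m\<in>T. 1 \<in> set m"
  shows "gs {l \<in> P. j \<in> set l \<and> remove1 j l \<in> T} (cc k z y) = y * fps_X ^ j * gs T (cc k z y)"
proof -
  let ?A = "{l \<in> P. j \<in> set l \<and> remove1 j l \<in> T}"
  have bij: "bij_betw (remove1 j) ?A T"
  proof -
    have e: "{m \<in> P. m \<in> T} = T" using assms(3) by auto
    show ?thesis using remove1_bij[of j "\<lambda>m. m \<in> T"] assms(1) unfolding e by simp
  qed
  have "gs T (\<lambda>m. y * fps_X ^ j * cc k z y m) = gs ?A (cc k z y)"
  proof (rule gs_reindex[OF bij])
    show "?A \<subseteq> P" "T \<subseteq> P" using assms by auto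
    fix l assume l: "l \<in> ?A"
    let ?r = "remove1 j l"
    have lP: "l \<in> P" and jl: "j \<in> set l" and rT: "?r \<in> T" using l by auto
    have r1: "1 \<in> set ?r" using rT assms(4) by blast
    have l1: "1 \<in> set l" using r1 set_remove1_subset by fastforce
    have len: "length l = Suc (length ?r)" using jl length_pos_if_in_set[of j l] by (simp add: length_remove1)
    have sm: "sum_list l = j + sum_list ?r" using jl by (rule sum_remove1)
    have fl: "filter (\<lambda>x. k < x) ?r = filter (\<lambda>x. k < x) l" using assms(2) by (intro filter_remove1) simp
    have "kmeasure k l = kmeasure k ?r"
      using km_one[OF lP l1] km_one[OF remove1_P[OF lP] r1] fl assms by simp
    then show "y * fps_X ^ j * cc k z y ?r * fps_X ^ sum_list ?r = cc k z y l * fps_X ^ sum_list l"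
      unfolding cc_def len sm by (simp add: power_add mult_ac)
  qed
  then show ?thesis using gs_mult[OF assms(3), of "y * fps_X ^ j" "cc k z y"] by simp
qed

definition HH :: "nat \<Rightarrow> nat \<Rightarrow> nat list set" where
  "HH k j = {l \<in> P. 1 \<in> set l \<and> (\<forall>x\<in>set l. x \<le> j \<or> k < x)}"

lemma HH_sub: "HH k j \<subseteq> P" by (auto simp: HH_def)

lemma qpoch_Suc: "qpoch A (Suc n) = qpoch A n * (1 - A * fps_X ^ n)"
  by (simp add: qpoch_def)

lemma km_Suc[simp]: "kmeasure k (map Suc xs) = kmeasure k xs"
  using km_shift[of k 1 xs] by simp

lemma sum_list_map_Suc[simp]: "sum_list (map Suc xs) = sum_list xs + length xs"
  by (induction xs) auto

lemma F_diff:
  fixes y z :: "'a::comm_ring_1 fps"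
  assumes k1: "1 \<le> k"
  shows "F k y z - F k (y * fps_X) z = gs (HH k k) (cc k z y)"
proof -
  let ?P2 = "{l \<in> P. (\<forall>x\<in>set l. 1 < x) \<and> True}"
  have bij: "bij_betw (map (\<lambda>x. x + 1)) P ?P2"
    using shift_bij[of 1 "\<lambda>_. True"] by simp
  have "gs ?P2 (cc k z y) = gs P (cc k z (y * fps_X))"
    by (rule gs_reindex[OF bij])
       (auto simp: cc_def km_shift sum_list_map_plus power_add power_mult_distrib mult_ac)
  moreover have "P = ?P2 \<union> HH k k"
    by (auto simp: HH_def P_mem) (metis One_nat_def Suc_lessI)
  moreover have "?P2 \<inter> HH k k = {}" by (auto simp: HH_def)
  ultimately have "F k y z = F k (y * fps_X) z + gs (HH k k) (cc k z y)"
    unfolding F_gs by (metis (no_types, lifting) HH_sub gs_union mem_Collect_eq subsetI)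
  then show ?thesis by simp
qed

lemma F_step:
  fixes y z :: "'a::comm_ring_1 fps"
  assumes "2 \<le> j" "j \<le> k"
  shows "gs (HH k j) (cc k z y) = y * fps_X ^ j * gs (HH k j) (cc k z y) + gs (HH k (j - 1)) (cc k z y)"
proof -
  let ?A = "{l \<in> P. j \<in> set l \<and> remove1 j l \<in> HH k j}"
  have "HH k j = ?A \<union> HH k (j - 1)"
  proof (intro equalityI subsetI)
    fix l assume l: "l \<in> HH k j"
    show "l \<in> ?A \<union> HH k (j - 1)"
    proof (cases "j \<in> set l")
      case True
      have "remove1 j l \<in> HH k j" using l assms remove1_P
        by (auto simp: HH_def dest: set_mp[OF set_remove1_subset])
      then show ?thesis using True l by (auto simp: HH_def)
    next
      case False
      have "\<forall>x\<in>set l. x \<le> j - 1 \<or> k < x"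
      proof
        fix x assume x: "x \<in> set l"
        then have "x \<noteq> j" using False by auto
        moreover have "x \<le> j \<or> k < x" using x l by (auto simp: HH_def)
        ultimately show "x \<le> j - 1 \<or> k < x" by linarith
      qed
      then have "l \<in> HH k (j - 1)" using l by (auto simp: HH_def)
      then show ?thesis by simp
    qed
  next
    fix l assume l: "l \<in> ?A \<union> HH k (j - 1)"
    then show "l \<in> HH k j"
    proof
      assume "l \<in> ?A"
      then show ?thesis using assms by (auto simp: HH_def dest: set_mp[OF set_remove1_subset]) (metis in_set_remove1 order_refl)+
    qed (auto simp: HH_def)
  qed
  moreover have "?A \<inter> HH k (j - 1) = {}" using assms by (auto simp: HH_def)
  moreover have "gs ?A (cc k z y) = y * fps_X ^ j * gs (HH k j) (cc k z y)"
    by (rule gs_remove1) (use assms in \<open>auto simp: HH_def\<close>)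
  ultimately show ?thesis
    by (metis (no_types, lifting) HH_sub gs_union mem_Collect_eq subsetI)
qed

lemma F_one:
  fixes y z :: "'a::comm_ring_1 fps"
  assumes k1: "1 \<le> k"
  shows "gs (HH k 1) (cc k z y) = y * fps_X * gs (HH k 1) (cc k z y) + y * z * fps_X * gs P (cc k z (y * fps_X ^ k))"
proof -
  let ?A = "{l \<in> P. 1 \<in> set l \<and> remove1 1 l \<in> HH k 1}"
  let ?E = "{l \<in> P. 1 \<in> set l \<and> (\<forall>x\<in>set l. x \<le> 1 \<or> k < x) \<and> 1 \<notin> set (remove1 1 l)}"
  have "HH k 1 = ?A \<union> ?E"
  proof (intro equalityI subsetI)
    fix l assume l: "l \<in> HH k 1"
    show "l \<in> ?A \<union> ?E"
    proof (cases "1 \<in> set (remove1 1 l)")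
      case True
      have "remove1 1 l \<in> HH k 1" using l True remove1_P
        by (auto simp: HH_def dest: set_mp[OF set_remove1_subset])
      then show ?thesis using l by (auto simp: HH_def)
    qed (use l in \<open>auto simp: HH_def\<close>)
  next
    fix l assume l: "l \<in> ?A \<union> ?E"
    then show "l \<in> HH k 1"
    proof
      assume "l \<in> ?A"
      then show ?thesis by (auto simp: HH_def dest: set_mp[OF set_remove1_subset]) (metis in_set_remove1)
    qed (auto simp: HH_def)
  qed
  moreover have "?A \<inter> ?E = {}" by (auto simp: HH_def)
  moreover have "gs ?A (cc k z y) = y * fps_X ^ 1 * gs (HH k 1) (cc k z y)"
    by (rule gs_remove1) (use assms in \<open>auto simp: HH_def\<close>)
  moreover have "gs ?E (cc k z y) = y * z * fps_X * gs P (cc k z (y * fps_X ^ k))"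
  proof -
    have bij: "bij_betw (h1 k) P ?E"
      unfolding bij_betw_def
    proof (intro conjI)
      show "inj_on (h1 k) P" using h1_inj by (metis inj_on_subset subset_UNIV)
      show "h1 k ` P = ?E"
      proof (intro equalityI subsetI)
        fix l assume "l \<in> h1 k ` P"
        then obtain m where m: "m \<in> P" "l = h1 k m" by auto
        have "\<forall>x\<in>set m. 0 < x" using m by (simp add: P_mem)
        then show "l \<in> ?E" using h1_P[OF m(1) k1] m(2) k1 by auto
      next
        fix l assume "l \<in> ?E"
        then show "l \<in> h1 k ` P" using h1_surj[of l k] k1 by blast
      qed
    qed
    have "gs ?E (cc k z y) = gs P (\<lambda>m. y * z * fps_X * cc k z (y * fps_X ^ k) m)"
    proof (rule gs_reindex[OF bij])
      show "P \<subseteq> P" "?E \<subseteq> P" by auto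
      fix m assume m: "m \<in> P"
      show "cc k z y (h1 k m) * fps_X ^ sum_list (h1 k m) = y * z * fps_X * cc k z (y * fps_X ^ k) m * fps_X ^ sum_list m"
        unfolding cc_def h1_len h1_sum h1_km[OF m k1]
        by (simp add: power_add power_mult_distrib power_mult[symmetric] mult_ac)
    qed
    then show ?thesis using gs_mult[of P "y * z * fps_X" "cc k z (y * fps_X ^ k)"] by simp
  qed
  ultimately show ?thesis
    by (metis (no_types, lifting) power_one_right HH_sub gs_union mem_Collect_eq subsetI)
qed

lemma F_main:
  fixes y z :: "'a::comm_ring_1 fps"
  assumes k1: "1 \<le> k"
  shows "1 \<le> j \<Longrightarrow> j \<le> k \<Longrightarrow> qpoch (y * fps_X) j * gs (HH k j) (cc k z y) = y * z * fps_X * gs P (cc k z (y * fps_X ^ k))"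
proof (induction j)
  case 0 then show ?case by simp
next
  case (Suc j)
  show ?case
  proof (cases "j = 0")
    case True
    have q1: "qpoch (y * fps_X) (Suc j) = 1 - y * fps_X" using True by (simp add: qpoch_def)
    show ?thesis unfolding q1 using True F_one[OF k1, of z y] by (simp add: algebra_simps)
  next
    case False
    have st: "gs (HH k (Suc j)) (cc k z y) = y * fps_X ^ Suc j * gs (HH k (Suc j)) (cc k z y) + gs (HH k j) (cc k z y)"
      using F_step[of "Suc j" k z y] False Suc.prems by simp
    have "qpoch (y * fps_X) (Suc j) * gs (HH k (Suc j)) (cc k z y)
        = qpoch (y * fps_X) j * ((1 - y * fps_X ^ Suc j) * gs (HH k (Suc j)) (cc k z y))"
      by (simp add: qpoch_Suc mult_ac)
    also have "(1 - y * fps_X ^ Suc j) * gs (HH k (Suc j)) (cc k z y) = gs (HH k j) (cc k z y)"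
      using st by (simp add: algebra_simps)
    finally show ?thesis using Suc False by simp
  qed
qed

definition HD :: "nat \<Rightarrow> nat \<Rightarrow> nat list set" where
  "HD k j = {l \<in> P. distinct l \<and> 1 \<in> set l \<and> (\<forall>x\<in>set l. x \<le> j \<or> k < x)}"

lemma HD_sub: "HD k j \<subseteq> P" by (auto simp: HD_def)

lemma G_diff:
  fixes y z :: "'a::comm_ring_1 fps"
  assumes k1: "1 \<le> k"
  shows "G k y z - G k (y * fps_X) z = gs (HD k k) (cc k z y)"
proof -
  let ?D = "{l \<in> P. distinct l}"
  let ?D2 = "{l \<in> P. (\<forall>x\<in>set l. 1 < x) \<and> distinct (map (\<lambda>x. x - 1) l)}"
  have bij: "bij_betw (map (\<lambda>x. x + 1)) ?D ?D2"
    using shift_bij[of 1 distinct] by simp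
  have "gs ?D2 (cc k z y) = gs ?D (cc k z (y * fps_X))"
  proof (rule gs_reindex[OF bij])
    show "?D \<subseteq> P" "?D2 \<subseteq> P" by auto
    fix m assume "m \<in> ?D"
    show "cc k z y (map (\<lambda>x. x + 1) m) * fps_X ^ sum_list (map (\<lambda>x. x + 1) m) = cc k z (y * fps_X) m * fps_X ^ sum_list m"
      by (simp add: cc_def power_add power_mult_distrib mult_ac)
  qed
  moreover have "?D = ?D2 \<union> HD k k"
  proof (intro equalityI subsetI)
    fix l assume l: "l \<in> ?D"
    show "l \<in> ?D2 \<union> HD k k"
    proof (cases "1 \<in> set l")
      case True then show ?thesis using l by (auto simp: HD_def)
    next
      case False
      then have g: "\<forall>x\<in>set l. 1 < x" using l by (auto simp: P_mem) (metis One_nat_def Suc_lessI)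
      then have "inj_on (\<lambda>x. x - 1) (set l)" by (auto simp: inj_on_def)
      then have "distinct (map (\<lambda>x. x - 1) l)" using l by (simp add: distinct_map)
      then show ?thesis using g l by auto
    qed
  next
    fix l assume "l \<in> ?D2 \<union> HD k k"
    then show "l \<in> ?D" by (auto simp: HD_def distinct_map)
  qed
  moreover have "?D2 \<inter> HD k k = {}" by (auto simp: HD_def)
  ultimately have "G k y z = G k (y * fps_X) z + gs (HD k k) (cc k z y)"
    unfolding G_gs by (metis (no_types, lifting) HD_sub gs_union mem_Collect_eq subsetI)
  then show ?thesis by simp
qed

lemma G_step:
  fixes y z :: "'a::comm_ring_1 fps"
  assumes "2 \<le> j" "j \<le> k"
  shows "gs (HD k j) (cc k z y) = y * fps_X ^ j * gs (HD k (j - 1)) (cc k z y) + gs (HD k (j - 1)) (cc k z y)"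
proof -
  let ?A = "{l \<in> P. j \<in> set l \<and> remove1 j l \<in> HD k (j - 1)}"
  have "HD k j = ?A \<union> HD k (j - 1)"
  proof (intro equalityI subsetI)
    fix l assume l: "l \<in> HD k j"
    have dl: "distinct l" using l by (simp add: HD_def)
    show "l \<in> ?A \<union> HD k (j - 1)"
    proof (cases "j \<in> set l")
      case True
      have nj: "j \<notin> set (remove1 j l)" and dr: "distinct (remove1 j l)"
        using distinct_remove1_iff[OF True] dl by simp_all
      have "\<forall>x\<in>set (remove1 j l). x \<le> j - 1 \<or> k < x"
      proof
        fix x assume x: "x \<in> set (remove1 j l)"
        then have "x \<noteq> j" using nj by auto
        moreover have "x \<in> set l" using x by (meson set_remove1_subset subsetD)
        then have "x \<le> j \<or> k < x" using l by (simp add: HD_def)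
        ultimately show "x \<le> j - 1 \<or> k < x" by linarith
      qed
      moreover have "1 \<in> set (remove1 j l)" using l assms by (simp add: HD_def)
      ultimately have "remove1 j l \<in> HD k (j - 1)" using dr l remove1_P by (simp add: HD_def)
      then show ?thesis using True l by (auto simp: HD_def)
    next
      case False
      have "\<forall>x\<in>set l. x \<le> j - 1 \<or> k < x"
      proof
        fix x assume x: "x \<in> set l"
        then have "x \<noteq> j" using False by auto
        moreover have "x \<le> j \<or> k < x" using x l by (auto simp: HD_def)
        ultimately show "x \<le> j - 1 \<or> k < x" by linarith
      qed
      then have "l \<in> HD k (j - 1)" using l by (auto simp: HD_def)
      then show ?thesis by simp
    qed
  next
    fix l assume l: "l \<in> ?A \<union> HD k (j - 1)"
    then show "l \<in> HD k j"
    proof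
      assume lA: "l \<in> ?A"
      then have jl: "j \<in> set l" and r: "remove1 j l \<in> HD k (j - 1)" and lP: "l \<in> P" by auto
      have rall: "\<forall>x\<in>set (remove1 j l). x \<le> j - 1 \<or> k < x" and dr: "distinct (remove1 j l)"
        and r1: "1 \<in> set (remove1 j l)" using r unfolding HD_def by blast+
      have nj: "j \<notin> set (remove1 j l)"
      proof
        assume "j \<in> set (remove1 j l)"
        then have "j \<le> j - 1 \<or> k < j" using rall by blast
        then show False using assms by linarith
      qed
      have "distinct l" using distinct_remove1_iff[OF jl] nj dr by blast
      moreover have "1 \<in> set l" using r1 assms by simp
      moreover have "\<forall>x\<in>set l. x \<le> j \<or> k < x"
      proof
        fix x assume x: "x \<in> set l"
        show "x \<le> j \<or> k < x"
        proof (cases "x = j")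
          case False
          then have "x \<in> set (remove1 j l)" using x by simp
          then show ?thesis using r by (auto simp: HD_def)
        qed simp
      qed
      ultimately show ?thesis using lP by (simp add: HD_def)
    qed (auto simp: HD_def)
  qed
  moreover have "?A \<inter> HD k (j - 1) = {}" using assms by (auto simp: HD_def)
  moreover have "gs ?A (cc k z y) = y * fps_X ^ j * gs (HD k (j - 1)) (cc k z y)"
    by (rule gs_remove1) (use assms in \<open>auto simp: HD_def\<close>)
  ultimately show ?thesis
    by (metis (no_types, lifting) HD_sub gs_union mem_Collect_eq subsetI)
qed

lemma G_one:
  fixes y z :: "'a::comm_ring_1 fps"
  assumes k1: "1 \<le> k"
  shows "gs (HD k 1) (cc k z y) = y * z * fps_X * gs {l \<in> P. distinct l} (cc k z (y * fps_X ^ k))"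
proof -
  let ?D = "{l \<in> P. distinct l}"
  have bij: "bij_betw (h1 k) ?D (HD k 1)"
    unfolding bij_betw_def
  proof (intro conjI)
    show "inj_on (h1 k) ?D" using h1_inj by (metis inj_on_subset subset_UNIV)
    show "h1 k ` ?D = HD k 1"
    proof (intro equalityI subsetI)
      fix l assume "l \<in> h1 k ` ?D"
      then obtain m where m: "m \<in> P" "distinct m" "l = h1 k m" by auto
      have pos: "\<forall>x\<in>set m. 0 < x" using m by (simp add: P_mem)
      then show "l \<in> HD k 1" using h1_P[OF m(1) k1] h1_distinct[OF pos k1] m k1 by (auto simp: HD_def)
    next
      fix l assume l: "l \<in> HD k 1"
      have "1 \<notin> set (remove1 1 l)" using l distinct_remove1_iff[of 1 l] by (auto simp: HD_def)
      then have m: "map (\<lambda>x. x - k) (filter (\<lambda>x. k < x) l) \<in> P" "l = h1 k (map (\<lambda>x. x - k) (filter (\<lambda>x. k < x) l))"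
        using h1_surj[of l k] k1 l by (auto simp: HD_def)
      have "distinct (map (\<lambda>x. x - k) (filter (\<lambda>x. k < x) l))"
        using h1_distinct[of "map (\<lambda>x. x - k) (filter (\<lambda>x. k < x) l)" k] m l k1 by (auto simp: HD_def P_mem)
      then show "l \<in> h1 k ` ?D" using m by blast
    qed
  qed
  have "gs (HD k 1) (cc k z y) = gs ?D (\<lambda>m. y * z * fps_X * cc k z (y * fps_X ^ k) m)"
  proof (rule gs_reindex[OF bij])
    show "?D \<subseteq> P" "HD k 1 \<subseteq> P" by (auto simp: HD_def)
    fix m assume m: "m \<in> ?D"
    then have mP: "m \<in> P" by simp
    show "cc k z y (h1 k m) * fps_X ^ sum_list (h1 k m) = y * z * fps_X * cc k z (y * fps_X ^ k) m * fps_X ^ sum_list m"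
      unfolding cc_def h1_len h1_sum h1_km[OF mP k1]
      by (simp add: power_add power_mult_distrib power_mult[symmetric] mult_ac)
  qed
  then show ?thesis using gs_mult[of ?D "y * z * fps_X" "cc k z (y * fps_X ^ k)"] by auto
qed

lemma G_main:
  fixes y z :: "'a::comm_ring_1 fps"
  assumes k1: "1 \<le> k"
  shows "1 \<le> j \<Longrightarrow> j \<le> k \<Longrightarrow> gs (HD k j) (cc k z y) = y * z * fps_X * qpoch (- (y * fps_X ^ 2)) (j - 1) * gs {l \<in> P. distinct l} (cc k z (y * fps_X ^ k))"
proof (induction j)
  case 0 then show ?case by simp
next
  case (Suc j)
  show ?case
  proof (cases "j = 0")
    case True
    then show ?thesis using G_one[OF k1, of z y] by (simp add: qpoch_def)
  next
    case False
    have st: "gs (HD k (Suc j)) (cc k z y) = (1 + y * fps_X ^ Suc j) * gs (HD k j) (cc k z y)"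
      using G_step[of "Suc j" k z y] False Suc.prems by (simp add: algebra_simps)
    have jj: "Suc j - 1 = Suc (j - 1)" using False by simp
    have xx: "fps_X ^ 2 * fps_X ^ (j - 1) = (fps_X ^ Suc j :: 'a fps)"
      using False by (simp add: power_add[symmetric])
    have q: "qpoch (- (y * fps_X ^ 2)) (Suc j - 1) = qpoch (- (y * fps_X ^ 2)) (j - 1) * (1 + y * fps_X ^ Suc j)"
      unfolding jj qpoch_Suc xx[symmetric] by (simp add: algebra_simps)
    show ?thesis unfolding st q using Suc False by (simp add: mult_ac)
  qed
qed

lemma qpoch_nth0: "fps_nth (qpoch (A * fps_X) n) 0 = (1::'a::comm_ring_1)"
  by (induction n) (simp_all add: qpoch_Suc qpoch_def)

theorem lemma2p1:
  fixes k :: nat and y z :: "'a::field fps"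
  assumes "k \<ge> 1"
  shows "(F k y z - F k (y * fps_X) z
           = y * z * fps_X / qpoch (y * fps_X) k * F k (y * fps_X ^ k) z)
       \<and> (G k y z - G k (y * fps_X) z
           = y * z * fps_X * qpoch (- (y * fps_X ^ 2)) (k - 1) * G k (y * fps_X ^ k) z)"
proof
  have k1: "1 \<le> k" using assms by simp
  let ?q = "qpoch (y * fps_X) k"
  let ?g = "gs (HH k k) (cc k z y)"
  have D: "F k y z - F k (y * fps_X) z = ?g" by (rule F_diff[OF k1])
  have M: "?q * ?g = y * z * fps_X * F k (y * fps_X ^ k) z"
    using F_main[OF k1, where j=k and y=y and z=z] k1 unfolding F_gs by simp
  have q0: "fps_nth ?q 0 \<noteq> 0" by (simp add: qpoch_nth0)
  have "y * z * fps_X / ?q * F k (y * fps_X ^ k) z = inverse ?q * (y * z * fps_X * F k (y * fps_X ^ k) z)"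
    unfolding fps_divide_unit[OF q0] by (simp only: mult_ac)
  also have "\<dots> = inverse ?q * ?q * ?g" unfolding M[symmetric] by (simp add: mult_ac)
  also have "\<dots> = ?g" using inverse_mult_eq_1[OF q0] by simp
  finally show "F k y z - F k (y * fps_X) z = y * z * fps_X / ?q * F k (y * fps_X ^ k) z"
    using D by simp
next
  have k1: "1 \<le> k" using assms by simp
  show "G k y z - G k (y * fps_X) z
           = y * z * fps_X * qpoch (- (y * fps_X ^ 2)) (k - 1) * G k (y * fps_X ^ k) z"
    using G_diff[OF k1, of y z] G_main[OF k1, where j=k and y=y and z=z] k1 unfolding G_gs by simp
qed


end
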